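(* For every integer $n\ge 1$, the sequence $(K_q(n,m))_{0\le m\le n}$ is strongly $q$-log-concave; that is, for all integers $1\le m\le l\le n-1$, the polynomial $K_q(n,m)K_q(n,l)-K_q(n,m-1)K_q(n,l+1)$ has nonnegative coefficients as a polynomial in $q$.
   Context: For integers $n\ge m\ge 0$ the Gaussian polynomial is ${n\brack m}=\prod_{i=0}^{m-1}\frac{1-q^{n-i}}{1-q^{m-i}}$. For $n\geq 1$ and $0\le m\le n$, the $q$-Kaplansky number is $K_q(n,m)=\frac{1-q^{n+m}}{1-q^{n}}{n\brack m}$ (a polynomial in $q$). A sequence of real polynomials $(f_k(q))$ is strongly $q$-log-concave if $f_a(q)f_b(q)-f_{a-1}(q)f_{b+1}(q)$ has nonnegative coefficients for all indices $b\ge a\ge 1$ (within the index range). *)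

theory Defs
  imports "HOL-Computational_Algebra.Polynomial"
begin

definition qvar :: "real poly" where "qvar = [:0, 1:]"

(* Gaussian polynomial [n choose m]_q = prod_{i<m} (1 - q^(n-i)) / (1 - q^(m-i)),
   computed as an exact polynomial quotient (the denominator divides the numerator) *)
definition gauss_poly :: "nat \<Rightarrow> nat \<Rightarrow> real poly" where
  "gauss_poly n m =
     (\<Prod>i<m. 1 - qvar ^ (n - i)) div (\<Prod>i<m. 1 - qvar ^ (m - i))"

definition kaplansky_poly :: "nat \<Rightarrow> nat \<Rightarrow> real poly" where
  "kaplansky_poly n m = ((1 - qvar ^ (n + m)) * gauss_poly n m) div (1 - qvar ^ n)"

definition nonneg_coeffs :: "real poly \<Rightarrow> bool" where
  "nonneg_coeffs p \<longleftrightarrow> (\<forall>k. coeff p k \<ge> 0)"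

end

theory Submission
  imports Defs
begin

lemma nn_add: "nonneg_coeffs p \<Longrightarrow> nonneg_coeffs q \<Longrightarrow> nonneg_coeffs (p + q)"
  by (simp add: nonneg_coeffs_def)

lemma nn_mult: "nonneg_coeffs p \<Longrightarrow> nonneg_coeffs q \<Longrightarrow> nonneg_coeffs (p * q)"
  unfolding nonneg_coeffs_def coeff_mult by (auto intro!: sum_nonneg mult_nonneg_nonneg)

lemma qvar_pow_monom: "qvar ^ k = monom 1 k"
  by (simp add: qvar_def monom_altdef)

lemma nn_qpow: "nonneg_coeffs (qvar ^ k)"
  by (simp add: qvar_pow_monom nonneg_coeffs_def)

lemma nn_0: "nonneg_coeffs 0" and nn_1: "nonneg_coeffs 1"
  by (auto simp: nonneg_coeffs_def coeff_1)

lemma nn_qmult: "nonneg_coeffs p \<Longrightarrow> nonneg_coeffs (qvar ^ k * p)"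
  by (rule nn_mult[OF nn_qpow])

fun gp :: "nat \<Rightarrow> nat \<Rightarrow> real poly" where
  "gp n 0 = 1"
| "gp 0 (Suc k) = 0"
| "gp (Suc n) (Suc k) = gp n k + qvar ^ Suc k * gp n (Suc k)"

lemma gp_zero: "k > n \<Longrightarrow> gp n k = 0"
proof (induction n arbitrary: k)
  case 0 then show ?case by (cases k) auto
next
  case (Suc n) then show ?case by (cases k) auto
qed

lemma gp_diag: "gp n n = 1"
  by (induction n) (auto simp: gp_zero)

lemma gp_nn: "nonneg_coeffs (gp n k)"
proof (induction n arbitrary: k)
  case 0 then show ?case by (cases k) (auto simp: nn_0 nn_1)
next
  case (Suc n) then show ?case by (cases k) (auto simp del: power_Suc simp: nn_1 intro!: nn_add nn_qmult)
qed

definition Gz :: "nat \<Rightarrow> int \<Rightarrow> real poly" where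
  "Gz n k = (if k < 0 then 0 else gp n (nat k))"

lemma Gz_nn: "nonneg_coeffs (Gz n k)"
  by (simp add: Gz_def gp_nn nn_0)

lemma Gz_big: "k > int n \<Longrightarrow> Gz n k = 0"
  by (simp add: Gz_def gp_zero)

lemma Gz_neg: "k < 0 \<Longrightarrow> Gz n k = 0"
  by (simp add: Gz_def)

lemma Gz_0: "Gz n 0 = 1" by (simp add: Gz_def)

lemma pascal1: "0 \<le> k \<Longrightarrow> Gz (Suc n) k = Gz n (k - 1) + qvar ^ nat k * Gz n k"
proof -
  assume "0 \<le> k"
  then obtain a where a: "k = int a" by (metis nonneg_int_cases)
  show ?thesis
  proof (cases a)
    case 0 then show ?thesis by (simp add: a Gz_def)
  next
    case (Suc b)
    then have "nat k = Suc b" "nat (k - 1) = b" "\<not> k < 0" "\<not> k - 1 < 0" using a by auto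
    then show ?thesis unfolding Gz_def by (simp del: power_Suc)
  qed
qed

lemma pascal2_nat: "k \<le> n \<Longrightarrow> gp (Suc n) (Suc k) = qvar ^ (n - k) * gp n k + gp n (Suc k)"
proof (induction n arbitrary: k)
  case 0 then show ?case by simp
next
  case (Suc n)
  show ?case
  proof (cases k)
    case 0
    have "gp (Suc n) 1 = qvar ^ n + gp n 1"
    proof (induction n)
      case 0 then show ?case by simp
    next
      case (Suc n) then show ?case by (simp add: algebra_simps)
    qed
    then show ?thesis using 0 by (simp add: algebra_simps)
  next
    case (Suc j)
    have j: "j \<le> n" using Suc Suc.prems by simp
    show ?thesis
    proof (cases "k = Suc n")
      case True
      then show ?thesis using Suc by (simp add: gp_zero gp_diag)
    next
      case False
      then have k: "k \<le> n" using Suc.prems by simp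
      have e1: "gp (Suc n) k = qvar ^ (n - j) * gp n j + gp n k"
        unfolding Suc by (rule Suc.IH[OF j])
      have e2: "gp (Suc n) (Suc k) = qvar ^ (n - k) * gp n k + gp n (Suc k)"
        using Suc.IH[OF k] .
      have ex: "n - j = Suc (n - k)" using Suc k by simp
      have "gp (Suc (Suc n)) (Suc k) = gp (Suc n) k + qvar ^ Suc k * gp (Suc n) (Suc k)" by simp
      also have "\<dots> = qvar ^ (n - j) * gp n j + gp n k + qvar ^ Suc k * (qvar ^ (n - k) * gp n k + gp n (Suc k))"
        by (simp only: e1 e2)
      also have "\<dots> = qvar ^ (Suc n - k) * (gp n j + qvar ^ k * gp n k) + (gp n k + qvar ^ Suc k * gp n (Suc k))"
      proof -
        have p1: "qvar ^ Suc k * qvar ^ (n - k) = qvar ^ Suc n" using k by (simp del: power_Suc add: power_add[symmetric])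
        have p2: "qvar ^ (Suc n - k) * qvar ^ k = qvar ^ Suc n" using k by (simp del: power_Suc add: power_add[symmetric])
        have p3: "n - j = Suc n - k" using Suc k by simp
        show ?thesis by (simp del: power_Suc add: p3 distrib_left mult.assoc[symmetric] p1 p2 add_ac)
      qed
      also have "\<dots> = qvar ^ (Suc n - k) * gp (Suc n) k + gp (Suc n) (Suc k)"
        using Suc by simp
      finally show ?thesis .
    qed
  qed
qed

lemma pascal2: "k \<le> int n + 1 \<Longrightarrow> Gz (Suc n) k = qvar ^ nat (int n + 1 - k) * Gz n (k - 1) + Gz n k"
proof -
  assume kn: "k \<le> int n + 1"
  consider "k < 0" | "k = 0" | a where "k = int (Suc a)" "a \<le> n"
  proof -
    have "k < 0 \<or> k = 0 \<or> (\<exists>a. k = int (Suc a) \<and> a \<le> n)"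
    proof (cases "k \<le> 0")
      case False
      then have "k = int (Suc (nat (k - 1)))" by simp
      moreover have "nat (k - 1) \<le> n" using kn by simp
      ultimately show ?thesis by blast
    qed auto
    then show "(k < 0 \<Longrightarrow> thesis) \<Longrightarrow> (k = 0 \<Longrightarrow> thesis) \<Longrightarrow> (\<And>a. k = int (Suc a) \<Longrightarrow> a \<le> n \<Longrightarrow> thesis) \<Longrightarrow> thesis" by blast
  qed
  then show ?thesis
  proof cases
    case 1 then show ?thesis by (simp add: Gz_def)
  next
    case 2 then show ?thesis by (simp add: Gz_def)
  next
    case 3
    then have "nat k = Suc a" "nat (k - 1) = a" "\<not> k < 0" "\<not> k - 1 < 0" "nat (int n + 1 - k) = n - a" by auto
    then show ?thesis unfolding Gz_def using pascal2_nat[OF 3(2)] by (simp del: power_Suc)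
  qed
qed

lemma Gz_zero_base: "Gz 0 k = (if k = 0 then 1 else 0)"
  by (simp add: Gz_def gp_zero)

definition H :: "nat \<Rightarrow> int \<Rightarrow> int \<Rightarrow> nat \<Rightarrow> real poly" where
  "H n i j t = Gz n i * Gz n j - qvar ^ t * (Gz n (i - 1) * Gz n (j + 1))"

lemma idB:
  fixes q C B x0 x1 x2 y0 y1 y2 :: "'a::comm_ring_1"
  shows "(C*x1 + x2)*(y0 + B*y1) - 1*(((q*C)*x0 + x1)*(y1 + (q*B)*y2))
     = C*(x1*y0 - q*(x0*y1)) + B*(x2*y1 - q*(x1*y2)) + (C*B)*(x1*y1 - (q*q)*(x0*y2)) + (x2*y0 - 1*(x1*y1))"
  by (simp add: algebra_simps)

lemma idP:
  fixes q A B x0 x1 x2 y0 y1 y2 :: "'a::comm_ring_1"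
  shows "(x1 + (q*A)*x2)*(y0 + B*y1) - q*((x0 + A*x1)*(y1 + (q*B)*y2))
     = (x1*y0 - q*(x0*y1)) + ((q*A)*B)*(x2*y1 - q*(x1*y2)) + (q*A)*(x2*y0 - 1*(x1*y1)) + B*(x1*y1 - (q*q)*(x0*y2))"
  by (simp add: algebra_simps)

lemma idA:
  fixes q A D x0 x1 x2 y0 y1 y2 :: "'a::comm_ring_1"
  shows "(x1 + (q*A)*x2)*((q*D)*y0 + y1) - (q*q)*((x0 + A*x1)*(D*y1 + y2))
     = (q*D)*(x1*y0 - q*(x0*y1)) + (q*A)*(x2*y1 - q*(x1*y2)) + (x1*y1 - (q*q)*(x0*y2)) + ((q*A)*(q*D))*(x2*y0 - 1*(x1*y1))"
  by (simp add: algebra_simps)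

lemma H_main:
  "(i \<le> j \<and> t \<le> 2) \<or> (i = j + 1 \<and> t = 0) \<Longrightarrow> nonneg_coeffs (H n i j t)"
proof (induction n arbitrary: i j t)
  case 0
  have eq: "Gz 0 (i - 1) * Gz 0 (j + 1) = 0" using 0 by (auto simp: Gz_zero_base)
  show ?case unfolding H_def eq mult_zero_right diff_zero by (rule nn_mult[OF Gz_nn Gz_nn])
next
  case (Suc n)
  note IH = Suc.IH
  consider "i = j + 1 \<and> t = 0" | "i \<le> 0" | "j \<ge> int n + 1" | "1 \<le> i" "i \<le> j" "j \<le> int n" "t \<le> 2"
    using Suc.prems by linarith
  then show ?case
  proof cases
    case 1 then show ?thesis by (simp add: H_def nn_0)
  next
    case 2 then show ?thesis by (simp add: H_def Gz_neg Gz_nn nn_mult)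
  next
    case 3 then show ?thesis by (simp add: H_def Gz_big Gz_nn nn_mult)
  next
    case 4
    define a' where "a' = nat (i - 1)"
    have a': "i = int (Suc a')" using 4 by (simp add: a'_def)
    define b where "b = nat j"
    have b: "j = int b" using 4 by (simp add: b_def)
    have ab: "Suc a' \<le> b" "b \<le> n" using 4 a' b by auto
    define c where "c = n - a'"
    define d' where "d' = n - b"
    define X0 where "X0 = Gz n (i - 2)"
    define X1 where "X1 = Gz n (i - 1)"
    define X2 where "X2 = Gz n i"
    define Y0 where "Y0 = Gz n (j - 1)"
    define Y1 where "Y1 = Gz n j"
    define Y2 where "Y2 = Gz n (j + 1)"
    note defs = X0_def X1_def X2_def Y0_def Y1_def Y2_def
    have e: "nat i = Suc a'" "nat (i - 1) = a'" "nat j = b" "nat (j + 1) = Suc b"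
      "nat (int n + 1 - i) = c" "nat (int n + 1 - (i - 1)) = Suc c"
      "nat (int n + 1 - j) = Suc d'" "nat (int n + 1 - (j + 1)) = d'"
      "i - 1 - 1 = i - 2" "j + 1 - 1 = j"
      using a' b ab by (auto simp: c_def d'_def)
    have ineq: "0 \<le> i" "0 \<le> i - 1" "0 \<le> j" "0 \<le> j + 1" "i \<le> int n + 1" "i - 1 \<le> int n + 1"
       "j \<le> int n + 1" "j + 1 \<le> int n + 1" using 4 by auto
    have P1i: "Gz (Suc n) i = X1 + (qvar * qvar ^ a') * X2"
      using pascal1[OF ineq(1), of n] unfolding defs e by simp
    have P1i1: "Gz (Suc n) (i - 1) = X0 + qvar ^ a' * X1"
      using pascal1[OF ineq(2), of n] unfolding defs e by simp
    have P1j: "Gz (Suc n) j = Y0 + qvar ^ b * Y1"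
      using pascal1[OF ineq(3), of n] unfolding defs e by simp
    have P1j1: "Gz (Suc n) (j + 1) = Y1 + (qvar * qvar ^ b) * Y2"
      using pascal1[OF ineq(4), of n] unfolding defs e by simp
    have P2i: "Gz (Suc n) i = qvar ^ c * X1 + X2"
      using pascal2[OF ineq(5)] unfolding defs e by simp
    have P2i1: "Gz (Suc n) (i - 1) = (qvar * qvar ^ c) * X0 + X1"
      using pascal2[OF ineq(6)] unfolding defs e by simp
    have P2j: "Gz (Suc n) j = (qvar * qvar ^ d') * Y0 + Y1"
      using pascal2[OF ineq(7)] unfolding defs e by simp
    have P2j1: "Gz (Suc n) (j + 1) = qvar ^ d' * Y1 + Y2"
      using pascal2[OF ineq(8)] unfolding defs e by simp
    have Hs: "H n (i - 1) (j - 1) 1 = X1*Y0 - qvar*(X0*Y1)"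
             "H n i j 1 = X2*Y1 - qvar*(X1*Y2)"
             "H n (i - 1) j 2 = X1*Y1 - (qvar*qvar)*(X0*Y2)"
             "H n i (j - 1) 0 = X2*Y0 - 1*(X1*Y1)"
      by (simp_all add: H_def defs power2_eq_square)
    have nH: "nonneg_coeffs (H n (i - 1) (j - 1) 1)" "nonneg_coeffs (H n i j 1)"
             "nonneg_coeffs (H n (i - 1) j 2)" "nonneg_coeffs (H n i (j - 1) 0)"
      by (rule IH; use 4 in auto)+
    have nq: "nonneg_coeffs qvar" using nn_qpow[of 1] by simp
    have t012: "t = 0 \<or> t = 1 \<or> t = 2" using 4 by auto
    then show ?thesis
    proof (elim disjE)
      assume t: "t = 0"
      have "H (Suc n) i j t = qvar ^ c * H n (i - 1) (j - 1) 1 + qvar ^ b * H n i j 1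
          + (qvar ^ c * qvar ^ b) * H n (i - 1) j 2 + H n i (j - 1) 0"
        unfolding Hs unfolding H_def t P2i P2i1 P1j P1j1 power_0 by (rule idB)
      then show ?thesis using nH by (auto intro!: nn_add nn_mult nn_qpow)
    next
      assume t: "t = 1"
      have "H (Suc n) i j t = H n (i - 1) (j - 1) 1 + ((qvar * qvar ^ a') * qvar ^ b) * H n i j 1
          + (qvar * qvar ^ a') * H n i (j - 1) 0 + qvar ^ b * H n (i - 1) j 2"
        unfolding Hs unfolding H_def t P1i P1i1 P1j P1j1 power_one_right by (rule idP)
      then show ?thesis using nH nq by (auto intro!: nn_add nn_mult nn_qpow)
    next
      assume t: "t = 2"
      have "H (Suc n) i j t = (qvar * qvar ^ d') * H n (i - 1) (j - 1) 1 + (qvar * qvar ^ a') * H n i j 1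
          + H n (i - 1) j 2 + ((qvar * qvar ^ a') * (qvar * qvar ^ d')) * H n i (j - 1) 0"
        unfolding Hs unfolding H_def t P1i P1i1 P2j P2j1 power2_eq_square by (rule idA)
      then show ?thesis using nH nq by (auto intro!: nn_add nn_mult nn_qpow)
    qed
  qed
qed


fun qf :: "nat \<Rightarrow> real poly" where
  "qf 0 = 1"
| "qf (Suc k) = qf k * (1 - qvar ^ Suc k)"

lemma one_minus_qpow_nz: "k > 0 \<Longrightarrow> (1 - qvar ^ k :: real poly) \<noteq> 0"
proof
  assume "k > 0" "1 - qvar ^ k = 0"
  then have "poly (1 - qvar ^ k) 0 = 0" by simp
  with \<open>k > 0\<close> show False by (simp add: qvar_def power_0_left)
qed

lemma qf_nz: "qf k \<noteq> 0"
proof (induction k)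
  case 0 then show ?case by simp
next
  case (Suc k)
  have "1 - qvar ^ Suc k \<noteq> 0" by (rule one_minus_qpow_nz) simp
  then show ?case using Suc by (simp del: power_Suc)
qed

lemma gp_qf: "m \<le> n \<Longrightarrow> gp n m * qf m * qf (n - m) = qf n"
proof (induction n arbitrary: m)
  case 0 then show ?case by simp
next
  case (Suc n)
  show ?case
  proof (cases m)
    case 0 then show ?thesis by simp
  next
    case (Suc k)
    show ?thesis
    proof (cases "k = n")
      case True then show ?thesis using Suc by (simp add: gp_zero gp_diag del: power_Suc)
    next
      case False
      then have kn: "k < n" using Suc Suc.prems by simp
      have i1: "gp n k * qf k * qf (n - k) = qf n" using Suc.IH[of k] kn by simp
      have i2: "gp n (Suc k) * qf (Suc k) * qf (n - Suc k) = qf n" using Suc.IH[of "Suc k"] kn by simp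
      have nk: "n - k = Suc (n - Suc k)" using kn by simp
      have pw: "qvar ^ Suc k * qvar ^ (n - k) = qvar ^ Suc n" using kn by (simp del: power_Suc add: power_add[symmetric])
      have "gp (Suc n) m * qf m * qf (Suc n - m)
          = (gp n k + qvar ^ Suc k * gp n (Suc k)) * (qf k * (1 - qvar ^ Suc k)) * qf (n - k)"
        using Suc by (simp del: power_Suc)
      also have "\<dots> = (gp n k * qf k * qf (n - k)) * (1 - qvar ^ Suc k)
           + qvar ^ Suc k * (gp n (Suc k) * qf (Suc k) * qf (n - Suc k)) * (1 - qvar ^ (n - k))"
        by (simp del: power_Suc add: nk algebra_simps)
      also have "\<dots> = qf n * (1 - qvar ^ Suc k) + qvar ^ Suc k * qf n * (1 - qvar ^ (n - k))"
        by (simp only: i1 i2)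
      also have "\<dots> = qf n * (1 - qvar ^ Suc n)"
        by (simp del: power_Suc add: algebra_simps pw[symmetric])
      also have "\<dots> = qf (Suc n)" by (simp del: power_Suc)
      finally show ?thesis .
    qed
  qed
qed

lemma num_qf: "m \<le> n \<Longrightarrow> (\<Prod>i<m. 1 - qvar ^ (n - i)) * qf (n - m) = qf n"
proof (induction m)
  case 0 then show ?case by simp
next
  case (Suc m)
  have nm: "n - m = Suc (n - Suc m)" using Suc.prems by simp
  have "(\<Prod>i<Suc m. 1 - qvar ^ (n - i)) * qf (n - Suc m)
      = (\<Prod>i<m. 1 - qvar ^ (n - i)) * (qf (n - Suc m) * (1 - qvar ^ (n - m)))"
    by (simp add: algebra_simps)
  also have "\<dots> = (\<Prod>i<m. 1 - qvar ^ (n - i)) * qf (n - m)"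
    by (simp only: nm qf.simps)
  also have "\<dots> = qf n" using Suc by simp
  finally show ?case .
qed

lemma gauss_gp: "m \<le> n \<Longrightarrow> gauss_poly n m = gp n m"
proof -
  assume mn: "m \<le> n"
  have den: "(\<Prod>i<m. 1 - qvar ^ (m - i)) = qf m" using num_qf[of m m] by simp
  have "(\<Prod>i<m. 1 - qvar ^ (n - i)) * qf (n - m) = (gp n m * qf m) * qf (n - m)"
    using num_qf[OF mn] gp_qf[OF mn] by simp
  then have num: "(\<Prod>i<m. 1 - qvar ^ (n - i)) = gp n m * qf m"
    using qf_nz[of "n - m"] by (metis mult_right_cancel)
  show ?thesis unfolding gauss_poly_def num den using qf_nz[of m] by simp
qed

lemma gp_shift: "m' \<le> n' \<Longrightarrow> (1 - qvar ^ Suc m') * gp (Suc n') (Suc m') = (1 - qvar ^ Suc n') * gp n' m'"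
proof -
  assume h: "m' \<le> n'"
  have a: "gp (Suc n') (Suc m') * qf (Suc m') * qf (n' - m') = qf (Suc n')" using gp_qf[of "Suc m'" "Suc n'"] h by simp
  have b: "gp n' m' * qf m' * qf (n' - m') = qf n'" using gp_qf[OF h] .
  have "((1 - qvar ^ Suc m') * gp (Suc n') (Suc m')) * (qf m' * qf (n' - m'))
      = ((1 - qvar ^ Suc n') * gp n' m') * (qf m' * qf (n' - m'))"
  proof -
    have "((1 - qvar ^ Suc m') * gp (Suc n') (Suc m')) * (qf m' * qf (n' - m')) = qf (Suc n')"
      using a by (simp del: power_Suc add: algebra_simps)
    also have "\<dots> = ((1 - qvar ^ Suc n') * gp n' m') * (qf m' * qf (n' - m'))"
      using b by (simp del: power_Suc add: algebra_simps)
    finally show ?thesis .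
  qed
  moreover have "qf m' * qf (n' - m') \<noteq> 0" using qf_nz by simp
  ultimately show ?thesis by (metis mult_right_cancel)
qed

lemma kap_Gz: "1 \<le> n \<Longrightarrow> m \<le> n \<Longrightarrow>
   kaplansky_poly n m = Gz n (int m) + qvar ^ n * Gz (n - 1) (int m - 1)"
proof -
  assume n1: "1 \<le> n" and mn: "m \<le> n"
  define G' where "G' = Gz (n - 1) (int m - 1)"
  have key: "(1 - qvar ^ m) * gp n m = (1 - qvar ^ n) * G'"
  proof (cases m)
    case 0 then show ?thesis by (simp add: G'_def Gz_def)
  next
    case (Suc m')
    obtain n' where n': "n = Suc n'" using n1 by (cases n) auto
    have "m' \<le> n'" using Suc n' mn by simp
    then show ?thesis using gp_shift[of m' n'] Suc n' by (simp add: G'_def Gz_def del: power_Suc)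
  qed
  have "(1 - qvar ^ (n + m)) * gauss_poly n m = (gp n m + qvar ^ n * G') * (1 - qvar ^ n)"
  proof -
    have "(1 - qvar ^ (n + m)) * gauss_poly n m = gp n m * (1 - qvar ^ n) + qvar ^ n * ((1 - qvar ^ m) * gp n m)"
      by (simp add: gauss_gp[OF mn] algebra_simps power_add)
    also have "\<dots> = (gp n m + qvar ^ n * G') * (1 - qvar ^ n)"
      by (simp only: key) (simp add: algebra_simps)
    finally show ?thesis .
  qed
  then have "kaplansky_poly n m = gp n m + qvar ^ n * G'"
    unfolding kaplansky_poly_def using one_minus_qpow_nz[of n] n1 by simp
  then show ?thesis by (simp add: G'_def Gz_def)
qed


lemma idK:
  fixes q Q E L b0 b1 b2 c0 c1 c2 :: "'a::comm_ring_1"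
  shows "((E*b1 + b2) + Q*b1) * ((c0 + L*c1) + Q*c0) - (((q*E)*b0 + b1) + Q*b0) * ((c1 + (q*L)*c2) + Q*c1)
   = ((E*b1 + b2)*(c0 + L*c1) - 1*(((q*E)*b0 + b1)*(c1 + (q*L)*c2))) + (Q*Q)*(b1*c0 - 1*(b0*c1))
     + Q*((b2*c0 - 1*(b1*c1)) + E*(b1*c0 - q*(b0*c1)) + (b1*c0 - 1*(b0*c1)) + L*(b1*c1 - q*(b0*c2)))"
  by (simp add: algebra_simps)

theorem corollary1p3:
  fixes n m l :: nat
  assumes "1 \<le> n" and "1 \<le> m" and "m \<le> l" and "l \<le> n - 1"
  shows "nonneg_coeffs (kaplansky_poly n m * kaplansky_poly n l
                        - kaplansky_poly n (m - 1) * kaplansky_poly n (l + 1))"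
proof -
  obtain n' where n': "n = Suc n'" using assms(1) by (cases n) auto
  have mn: "m \<le> n" "l \<le> n" "m - 1 \<le> n" "l + 1 \<le> n" using assms by auto
  define b0 where "b0 = Gz n' (int m - 2)"
  define b1 where "b1 = Gz n' (int m - 1)"
  define b2 where "b2 = Gz n' (int m)"
  define c0 where "c0 = Gz n' (int l - 1)"
  define c1 where "c1 = Gz n' (int l)"
  define c2 where "c2 = Gz n' (int l + 1)"
  define Q where "Q = qvar ^ n"
  define E where "E = qvar ^ (n - m)"
  define L where "L = qvar ^ l"
  note defs = b0_def b1_def b2_def c0_def c1_def c2_def
  have im: "int (m - 1) = int m - 1" using assms by simp
  have Km: "kaplansky_poly n m = Gz n (int m) + Q * b1"
    using kap_Gz[OF assms(1) mn(1)] n' by (simp add: Q_def b1_def)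
  have Kl: "kaplansky_poly n l = Gz n (int l) + Q * c0"
    using kap_Gz[OF assms(1) mn(2)] n' by (simp add: Q_def c0_def)
  have Km1: "kaplansky_poly n (m - 1) = Gz n (int m - 1) + Q * b0"
    using kap_Gz[OF assms(1) mn(3)] n' im by (simp add: Q_def b0_def)
  have Kl1': "kaplansky_poly n (l + 1) = Gz n (int l + 1) + qvar ^ n * Gz (n - 1) (int l + 1 - 1)"
    using kap_Gz[OF assms(1) mn(4)] by (simp only: of_nat_add of_nat_1)
  have Kl1: "kaplansky_poly n (l + 1) = Gz n (int l + 1) + Q * c1"
    unfolding Kl1' Q_def c1_def by (simp add: n')
  have e: "nat (int n' + 1 - int m) = n - m" "nat (int n' + 1 - (int m - 1)) = Suc (n - m)"
    "nat (int l) = l" "nat (int l + 1) = Suc l" "int m - 1 - 1 = int m - 2" "int l + 1 - 1 = int l"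
    using assms n' by auto
  have ineq: "int m \<le> int n' + 1" "int m - 1 \<le> int n' + 1" "0 \<le> int l" "0 \<le> int l + 1"
    using assms n' by auto
  have Am: "Gz n (int m) = E * b1 + b2"
    using pascal2[OF ineq(1)] unfolding n' defs E_def e by (simp add: n')
  have Am1: "Gz n (int m - 1) = (qvar * E) * b0 + b1"
    using pascal2[OF ineq(2)] unfolding n' defs E_def e by (simp add: n')
  have Al: "Gz n (int l) = c0 + L * c1"
    using pascal1[OF ineq(3), of n'] unfolding n' defs L_def e by simp
  have Al1: "Gz n (int l + 1) = c1 + (qvar * L) * c2"
    using pascal1[OF ineq(4), of n'] unfolding n' defs L_def e by simp
  have Hs: "H n' (int m - 1) (int l - 1) 0 = b1*c0 - 1*(b0*c1)"
           "H n' (int m) (int l - 1) 0 = b2*c0 - 1*(b1*c1)"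
           "H n' (int m - 1) (int l - 1) 1 = b1*c0 - qvar*(b0*c1)"
           "H n' (int m - 1) (int l) 1 = b1*c1 - qvar*(b0*c2)"
    by (simp_all add: H_def defs)
  have Hn: "H n (int m) (int l) 0 = (E*b1 + b2)*(c0 + L*c1) - 1*(((qvar*E)*b0 + b1)*(c1 + (qvar*L)*c2))"
    unfolding H_def Am Am1 Al Al1 by simp
  have eq: "kaplansky_poly n m * kaplansky_poly n l - kaplansky_poly n (m - 1) * kaplansky_poly n (l + 1)
     = H n (int m) (int l) 0 + (Q*Q) * H n' (int m - 1) (int l - 1) 0
       + Q * (H n' (int m) (int l - 1) 0 + E * H n' (int m - 1) (int l - 1) 1
              + H n' (int m - 1) (int l - 1) 0 + L * H n' (int m - 1) (int l) 1)"
    unfolding Hs Hn Km Kl Km1 Kl1 Am Am1 Al Al1 by (rule idK)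
  have n1: "nonneg_coeffs (H n (int m) (int l) 0)" by (rule H_main) (use assms in auto)
  have n2: "nonneg_coeffs (H n' (int m - 1) (int l - 1) 0)" by (rule H_main) (use assms in auto)
  have n3: "nonneg_coeffs (H n' (int m) (int l - 1) 0)" by (rule H_main) (use assms in auto)
  have n4: "nonneg_coeffs (H n' (int m - 1) (int l - 1) 1)" by (rule H_main) (use assms in auto)
  have n5: "nonneg_coeffs (H n' (int m - 1) (int l) 1)" by (rule H_main) (use assms in auto)
  show ?thesis unfolding eq Q_def E_def L_def
    by (intro nn_add nn_mult nn_qpow n1 n2 n3 n4 n5)
qed

end
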